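(* Let $G_n$ be the de Bruijn graph of span $n$ defined in the context. Let $r$ be any vertex of $G_n$, and for each vertex $v\neq r$ of $G_n$ let $e_v$ be any arc of $G_n$ with tail $v$. Let $H$ be the spanning subgraph of $G_n$ whose arc set is $\{e_v : v\in V(G_n)\setminus\{r\}\}$. Let $W$ be a walk in $G_n$ starting at $r$ which avoids $H$. Let $v$ be a vertex of $G_n$ which is not on a directed cycle of $H$ and which is exhausted by $W$, and let $W_v$ be the initial subwalk of $W$ starting at $r$ and finishing at the moment it exhausts $v$. Then every vertex $u$ of $H_v$ is exhausted by $W_v$.
   Context: Let $A$ be a finite alphabet with a linear order $<$. Let $\mathcal{F}$ be a set of words over $A$ (forbidden words). A word $w$ is said to be in the language if the bi-infinite periodic sequence $\cdots www\cdots$ contains no element of $\mathcal{F}$ as a factor (contiguous subword). For $k\ge 1$, $W_k$ denotes the set of words of length $k$ in the language. Fix $n\geq 1$ and consider the directed graph whose vertex set is $A^n$ and whose arcs are the pairs $(as,sb)$ with $a,b\in A$, $s\in A^{n-1}$ and $asb\in W_{n+1}$; the label of the arc $(as,sb)$ is $b$. The de Bruijn graph of span $n$, $G_n$, is a strongly connected component of maximum size of this digraph. Vertices are identified with their words. A walk $W$ in $G_n$ starting at $r$ avoids $H$ if it is constructed as follows: start at $r$; if the current walk is $v_0e_0\cdots v_i$ and there is an arc with tail $v_i$ not in $H$ that has not yet been used by the walk, extend the walk by one such arc; otherwise, if the arc $e_{v_i}$ (when defined) has not yet been used, extend the walk by $e_{v_i}$; otherwise stop. A walk exhausts a vertex $x$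 if it uses every arc of $G_n$ having $x$ as head or as tail. For a vertex $v$ not lying on a directed cycle of $H$, $H_v$ denotes the subtree of $H$ converging to $v$, i.e. the set of vertices $u$ (including $v$) from which there is a directed path to $v$ using arcs of $H$. *)

theory Defs
  imports Main
begin

definition periodic_factor :: "'a list \<Rightarrow> 'a list \<Rightarrow> bool" where
  "periodic_factor f w \<longleftrightarrow>
     (\<exists>i::nat. f = map (\<lambda>j. w ! ((i + j) mod length w)) [0..<length f])"

text \<open>w is in the language: the bi-infinite periodic sequence ...www... contains no forbidden factor.\<close>
definition in_lang :: "'a list set \<Rightarrow> 'a list \<Rightarrow> bool" where
  "in_lang F w \<longleftrightarrow> w \<noteq> [] \<and> (\<forall>f\<in>F. \<not> periodic_factor f w)"

definition W_k :: "'a set \<Rightarrow> 'a list set \<Rightarrow> nat \<Rightarrow> 'a list set" where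
  "W_k A F k = {w. set w \<subseteq> A \<and> length w = k \<and> in_lang F w}"

definition words :: "'a set \<Rightarrow> nat \<Rightarrow> 'a list set" where
  "words A n = {w. set w \<subseteq> A \<and> length w = n}"

definition db_arcs :: "'a set \<Rightarrow> 'a list set \<Rightarrow> nat \<Rightarrow> ('a list \<times> 'a list) set" where
  "db_arcs A F n = {(a # s, s @ [b]) | a s b. a \<in> A \<and> b \<in> A \<and> set s \<subseteq> A \<and>
       length s = n - 1 \<and> a # s @ [b] \<in> W_k A F (Suc n)}"

definition is_scc :: "'v set \<Rightarrow> ('v \<times> 'v) set \<Rightarrow> 'v set \<Rightarrow> bool" where
  "is_scc V E C \<longleftrightarrow> C \<noteq> {} \<and> C \<subseteq> V \<and> (\<forall>x\<in>C. \<forall>y\<in>C. (x, y) \<in> E\<^sup>*) \<and>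
     (\<forall>D. C \<subseteq> D \<and> D \<subseteq> V \<and> (\<forall>x\<in>D. \<forall>y\<in>D. (x, y) \<in> E\<^sup>*) \<longrightarrow> D = C)"

text \<open>C is a vertex set of a de Bruijn graph G_n of span n: an SCC of maximum size.\<close>
definition is_dB_vertices :: "'a set \<Rightarrow> 'a list set \<Rightarrow> nat \<Rightarrow> 'a list set \<Rightarrow> bool" where
  "is_dB_vertices A F n C \<longleftrightarrow> is_scc (words A n) (db_arcs A F n) C \<and>
     (\<forall>D. is_scc (words A n) (db_arcs A F n) D \<longrightarrow> card D \<le> card C)"

definition dB_arcs :: "'a set \<Rightarrow> 'a list set \<Rightarrow> nat \<Rightarrow> 'a list set \<Rightarrow> ('a list \<times> 'a list) set" where
  "dB_arcs A F n C = {(x, y). x \<in> C \<and> y \<in> C \<and> (x, y) \<in> db_arcs A F n}"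

definition walk_arcs :: "'v list \<Rightarrow> ('v \<times> 'v) list" where
  "walk_arcs vs = zip vs (tl vs)"

definition exhausts :: "('v \<times> 'v) set \<Rightarrow> ('v \<times> 'v) set \<Rightarrow> 'v \<Rightarrow> bool" where
  "exhausts Ar U x \<longleftrightarrow> (\<forall>a\<in>Ar. (fst a = x \<or> snd a = x) \<longrightarrow> a \<in> U)"

text \<open>The walk vs in the graph with arc set Ar, starting at r, avoids H (arc set Hs, with
  e x the chosen arc out of x for x \<noteq> r), built until the construction stops.\<close>
definition avoids_walk ::
  "('v \<times> 'v) set \<Rightarrow> ('v \<times> 'v) set \<Rightarrow> ('v \<Rightarrow> 'v \<times> 'v) \<Rightarrow> 'v \<Rightarrow> 'v list \<Rightarrow> bool" where
  "avoids_walk Ar Hs e r vs \<longleftrightarrow> vs \<noteq> [] \<and> hd vs = r \<and>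
    (\<forall>i < length vs - 1.
       (let x = vs ! i; ei = (vs ! i, vs ! Suc i); used = set (take i (walk_arcs vs)) in
        ei \<in> Ar \<and> ei \<notin> used \<and>
        (if (\<exists>a\<in>Ar. fst a = x \<and> a \<notin> Hs \<and> a \<notin> used) then ei \<notin> Hs
         else (x \<noteq> r \<and> ei = e x)))) \<and>
    (let x = last vs; used = set (walk_arcs vs) in
       \<not> (\<exists>a\<in>Ar. fst a = x \<and> a \<notin> Hs \<and> a \<notin> used) \<and> (x = r \<or> e x \<in> used))"

end

theory Submission
  imports Defs
begin


lemma pf_rotate1:
  assumes "w \<noteq> []"
  shows "periodic_factor f (rotate1 w) \<longleftrightarrow> periodic_factor f w"
proof
  assume "periodic_factor f (rotate1 w)"
  then obtain i where i: "f = map (\<lambda>j. rotate1 w ! ((i + j) mod length (rotate1 w))) [0..<length f]"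
    unfolding periodic_factor_def by blast
  have eq: "(\<lambda>j. rotate1 w ! ((i + j) mod length (rotate1 w))) = (\<lambda>j. w ! ((Suc i + j) mod length w))"
    by (rule ext) (simp add: nth_rotate1 assms mod_Suc_eq)
  show "periodic_factor f w" unfolding periodic_factor_def using i eq by metis
next
  assume "periodic_factor f w"
  then obtain i where i: "f = map (\<lambda>j. w ! ((i + j) mod length w)) [0..<length f]"
    unfolding periodic_factor_def by blast
  have eq: "(\<lambda>j. rotate1 w ! ((i + length w - 1 + j) mod length (rotate1 w))) = (\<lambda>j. w ! ((i + j) mod length w))"
  proof (rule ext)
    fix j
    have L: "length w > 0" using assms by simp
    have "rotate1 w ! ((i + length w - 1 + j) mod length (rotate1 w)) = w ! (Suc ((i + length w - 1 + j) mod length w) mod length w)"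
      using L by (simp add: nth_rotate1)
    also have "Suc ((i + length w - 1 + j) mod length w) mod length w = Suc (i + length w - 1 + j) mod length w"
      by (simp add: mod_Suc_eq)
    also have "Suc (i + length w - 1 + j) = (i + j) + length w" using L by simp
    finally show "rotate1 w ! ((i + length w - 1 + j) mod length (rotate1 w)) = w ! ((i + j) mod length w)" by simp
  qed
  show "periodic_factor f (rotate1 w)" unfolding periodic_factor_def using i eq by metis
qed

lemma in_lang_rot: "in_lang F (b # u) \<longleftrightarrow> in_lang F (u @ [b])"
proof -
  have "u @ [b] = rotate1 (b # u)" by simp
  then show ?thesis unfolding in_lang_def using pf_rotate1[of "b#u"] by auto
qed

lemma distinct_by_take: "(\<forall>i<length xs. xs!i \<notin> set (take i xs)) \<Longrightarrow> distinct xs"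
  unfolding distinct_conv_nth
  by (metis in_set_conv_nth length_take linorder_neqE_nat min.absorb4 nth_take order.strict_trans)

lemma count_walk:
  assumes "L \<noteq> []" "hd L \<noteq> u" "distinct (walk_arcs L)"
  shows "card {a \<in> set (walk_arcs L). fst a = u} \<le> card {a \<in> set (walk_arcs L). snd a = u}"
proof -
  let ?P = "walk_arcs L"
  have c1: "card {a \<in> set ?P. fst a = u} = length (filter (\<lambda>a. fst a = u) ?P)"
    using assms(3) by (metis distinct_card distinct_filter set_filter)
  have c2: "card {a \<in> set ?P. snd a = u} = length (filter (\<lambda>a. snd a = u) ?P)"
    using assms(3) by (metis distinct_card distinct_filter set_filter)
  have m1: "map fst ?P = butlast L" unfolding walk_arcs_def by (simp add: map_fst_zip_take butlast_conv_take)
  have m2: "map snd ?P = tl L" unfolding walk_arcs_def by (simp add: map_snd_zip_take)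
  have "length (filter (\<lambda>a. fst a = u) ?P) = length (filter (\<lambda>x. x = u) (butlast L))"
    using length_filter_map[of "\<lambda>x. x = u" fst ?P] m1 by (simp add: comp_def)
  also have "\<dots> \<le> length (filter (\<lambda>x. x = u) L)"
    using append_butlast_last_id[OF assms(1)] by (metis filter_append le_add1 length_append)
  also have "\<dots> = length (filter (\<lambda>x. x = u) (tl L))"
    using assms(1,2) by (cases L) auto
  also have "\<dots> = length (filter (\<lambda>a. snd a = u) ?P)"
    using length_filter_map[of "\<lambda>x. x = u" snd ?P] m2 by (simp add: comp_def)
  finally show ?thesis using c1 c2 by simp
qed



lemma db_arcs_sub:
  assumes "n \<ge> 1"
  shows "db_arcs A F n \<subseteq> words A n \<times> words A n"
  using assms unfolding db_arcs_def words_def by auto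

lemma finite_words: "finite A \<Longrightarrow> finite (words A n)"
  unfolding words_def using finite_lists_length_eq by blast

lemma out_eq:
  assumes "n \<ge> 1" "u \<in> words A n"
  shows "{a \<in> db_arcs A F n. fst a = u} = (\<lambda>b. (u, tl u @ [b])) ` {b \<in> A. u @ [b] \<in> W_k A F (Suc n)}"
proof -
  have une: "u \<noteq> []" "length (tl u) = n - 1" "hd u \<in> A" "set (tl u) \<subseteq> A"
    using assms unfolding words_def
    by (auto, metis hd_in_set list.size(3) not_one_le_zero subsetD, metis list.set_sel(2) list.size(3) not_one_le_zero subsetD)
  show ?thesis
  proof (intro equalityI subsetI)
    fix x assume "x \<in> {a \<in> db_arcs A F n. fst a = u}"
    then obtain a s b where "x = (a # s, s @ [b])" "a \<in> A" "b \<in> A" "a # s @ [b] \<in> W_k A F (Suc n)" "a # s = u"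
      unfolding db_arcs_def by auto
    then show "x \<in> (\<lambda>b. (u, tl u @ [b])) ` {b \<in> A. u @ [b] \<in> W_k A F (Suc n)}" by auto
  next
    fix x assume "x \<in> (\<lambda>b. (u, tl u @ [b])) ` {b \<in> A. u @ [b] \<in> W_k A F (Suc n)}"
    then obtain b where "x = (u, tl u @ [b])" "b \<in> A" "u @ [b] \<in> W_k A F (Suc n)" by auto
    moreover have "u = hd u # tl u" "hd u # tl u @ [b] = u @ [b]" using une by simp_all
    ultimately show "x \<in> {a \<in> db_arcs A F n. fst a = u}"
    proof -
      have "(hd u # tl u, tl u @ [b]) \<in> db_arcs A F n"
        unfolding db_arcs_def using une \<open>b \<in> A\<close> \<open>u @ [b] \<in> W_k A F (Suc n)\<close>
        by (simp only: mem_Collect_eq) (intro exI conjI, rule refl, auto simp del: append_Cons simp add: append_Cons[symmetric])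
      then show ?thesis using \<open>x = (u, tl u @ [b])\<close> une by simp
    qed
  qed
qed

lemma in_eq:
  assumes "n \<ge> 1" "u \<in> words A n"
  shows "{a \<in> db_arcs A F n. snd a = u} = (\<lambda>c. (c # butlast u, u)) ` {c \<in> A. c # u \<in> W_k A F (Suc n)}"
proof -
  have une: "u \<noteq> []" "length (butlast u) = n - 1" "last u \<in> A" "set (butlast u) \<subseteq> A"
    using assms unfolding words_def
    by (auto dest: in_set_butlastD, metis last_in_set list.size(3) not_one_le_zero subsetD)
  show ?thesis
  proof (intro equalityI subsetI)
    fix x assume "x \<in> {a \<in> db_arcs A F n. snd a = u}"
    then obtain a s b where "x = (a # s, s @ [b])" "a \<in> A" "b \<in> A" "a # s @ [b] \<in> W_k A F (Suc n)" "s @ [b] = u"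
      unfolding db_arcs_def by auto
    then show "x \<in> (\<lambda>c. (c # butlast u, u)) ` {c \<in> A. c # u \<in> W_k A F (Suc n)}" by auto
  next
    fix x assume "x \<in> (\<lambda>c. (c # butlast u, u)) ` {c \<in> A. c # u \<in> W_k A F (Suc n)}"
    then obtain c where "x = (c # butlast u, u)" "c \<in> A" "c # u \<in> W_k A F (Suc n)" by auto
    moreover have "u = butlast u @ [last u]" using une by simp
    ultimately show "x \<in> {a \<in> db_arcs A F n. snd a = u}"
      unfolding db_arcs_def using une
      by (auto intro!: exI[of _ c] exI[of _ "butlast u"] exI[of _ "last u"])
  qed
qed

lemma rot_W: "b \<in> A \<Longrightarrow> u @ [b] \<in> W_k A F m \<longleftrightarrow> b # u \<in> W_k A F m"
  unfolding W_k_def using in_lang_rot[of F b u] by auto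

lemma balanced:
  assumes "n \<ge> 1"
  shows "card {a \<in> db_arcs A F n. fst a = u} = card {a \<in> db_arcs A F n. snd a = u}"
proof (cases "u \<in> words A n")
  case True
  have "card {a \<in> db_arcs A F n. fst a = u} = card {b \<in> A. u @ [b] \<in> W_k A F (Suc n)}"
    unfolding out_eq[OF assms True] by (rule card_image) (auto simp: inj_on_def)
  also have "\<dots> = card {c \<in> A. c # u \<in> W_k A F (Suc n)}"
    using rot_W by (metis (no_types, lifting))
  also have "\<dots> = card {a \<in> db_arcs A F n. snd a = u}"
    unfolding in_eq[OF assms True] by (rule card_image[symmetric]) (auto simp: inj_on_def)
  finally show ?thesis .
next
  case False
  then have "{a \<in> db_arcs A F n. fst a = u} = {}" "{a \<in> db_arcs A F n. snd a = u} = {}"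
    using db_arcs_sub[OF assms] by auto
  then show ?thesis by (simp only:)
qed

lemma cycle:
  fixes E :: "('v \<times> 'v) set"
  assumes fin: "finite E" and bal: "\<And>z. card {a \<in> E. fst a = z} = card {a \<in> E. snd a = z}"
    and xy: "(x, y) \<in> E"
  shows "(y, x) \<in> E\<^sup>*"
proof (rule ccontr)
  assume nx: "(y, x) \<notin> E\<^sup>*"
  define R where "R = {z. (y, z) \<in> E\<^sup>*}"
  have Rsub: "R \<subseteq> insert y (snd ` E)"
    unfolding R_def by (auto elim: rtranclE simp: image_iff) (metis rtranclE snd_conv)
  have finR: "finite R" using finite_subset[OF Rsub] fin by blast
  define Eo where "Eo = {a \<in> E. fst a \<in> R}"
  define Ei where "Ei = {a \<in> E. snd a \<in> R}"
  have "Eo \<subseteq> Ei" unfolding Eo_def Ei_def R_def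
    by auto
  moreover have "(x, y) \<in> Ei" "(x, y) \<notin> Eo" using xy nx unfolding Ei_def Eo_def R_def by auto
  ultimately have "card Eo < card Ei" using fin unfolding Ei_def
    by (metis (no_types, lifting) psubsetI mem_Collect_eq finite_subset psubset_card_mono subsetI)
  moreover have "Eo = (\<Union>z\<in>R. {a \<in> E. fst a = z})" unfolding Eo_def by auto
  then have "card Eo = (\<Sum>z\<in>R. card {a \<in> E. fst a = z})"
    using finR fin by (auto intro!: card_UN_disjoint)
  moreover have "Ei = (\<Union>z\<in>R. {a \<in> E. snd a = z})" unfolding Ei_def by auto
  then have "card Ei = (\<Sum>z\<in>R. card {a \<in> E. snd a = z})"
    using finR fin by (auto intro!: card_UN_disjoint)
  ultimately show False using bal by simp
qed



lemma zip_take_Suc: "zip (take (Suc k) xs) (take k ys) = zip (take k xs) (take k ys)"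
proof (induct k arbitrary: xs ys)
  case 0 then show ?case by simp
next
  case (Suc k) then show ?case by (cases xs; cases ys) auto
qed

lemma scc_closed:
  assumes scc: "is_scc V E C" and u: "u \<in> C" and y: "y \<in> V"
    and uy: "(u, y) \<in> E\<^sup>*" and yu: "(y, u) \<in> E\<^sup>*"
  shows "y \<in> C"
proof -
  have all: "\<forall>x\<in>C. \<forall>z\<in>C. (x, z) \<in> E\<^sup>*" "C \<subseteq> V"
    and max: "\<And>D. C \<subseteq> D \<Longrightarrow> D \<subseteq> V \<Longrightarrow> (\<forall>x\<in>D. \<forall>z\<in>D. (x, z) \<in> E\<^sup>*) \<Longrightarrow> D = C"
    using scc unfolding is_scc_def by blast+
  have "\<forall>x\<in>insert y C. \<forall>z\<in>insert y C. (x, z) \<in> E\<^sup>*"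
  proof (intro ballI)
    fix x z assume "x \<in> insert y C" "z \<in> insert y C"
    then show "(x, z) \<in> E\<^sup>*"
      using all(1) u uy yu by (auto intro: rtrancl_trans)
  qed
  then have "insert y C = C" using max[of "insert y C"] all(2) y by blast
  then show ?thesis by blast
qed

lemma balanced_C:
  assumes "finite A" "n \<ge> 1" "is_dB_vertices A F n C" "u \<in> C"
  shows "card {a \<in> dB_arcs A F n C. fst a = u} = card {a \<in> dB_arcs A F n C. snd a = u}"
proof -
  let ?E = "db_arcs A F n"
  have scc: "is_scc (words A n) ?E C" using assms(3) unfolding is_dB_vertices_def by blast
  have finE: "finite ?E" using db_arcs_sub[OF assms(2), of A F] finite_words[OF assms(1), of n]
    by (meson finite_SigmaI finite_subset)
  have cyc: "\<And>x y. (x, y) \<in> ?E \<Longrightarrow> (y, x) \<in> ?E\<^sup>*"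
    using cycle[OF finE] balanced[OF assms(2)] by blast
  have uC: "C \<subseteq> words A n" using scc unfolding is_scc_def by blast
  have "{a \<in> dB_arcs A F n C. fst a = u} = {a \<in> ?E. fst a = u}"
  proof (intro equalityI subsetI)
    fix a assume a: "a \<in> {a \<in> ?E. fst a = u}"
    obtain x y where xy: "a = (x, y)" by fastforce
    have "y \<in> C"
      apply (rule scc_closed[OF scc assms(4)])
      using a xy db_arcs_sub[OF assms(2)] cyc by auto
    then show "a \<in> {a \<in> dB_arcs A F n C. fst a = u}" using a xy assms(4) unfolding dB_arcs_def by auto
  qed (auto simp: dB_arcs_def)
  moreover have "{a \<in> dB_arcs A F n C. snd a = u} = {a \<in> ?E. snd a = u}"
  proof (intro equalityI subsetI)
    fix a assume a: "a \<in> {a \<in> ?E. snd a = u}"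
    obtain x y where xy: "a = (x, y)" by fastforce
    have "x \<in> C"
      apply (rule scc_closed[OF scc assms(4)])
      using a xy db_arcs_sub[OF assms(2)] cyc by auto
    then show "a \<in> {a \<in> dB_arcs A F n C. snd a = u}" using a xy assms(4) unfolding dB_arcs_def by auto
  qed (auto simp: dB_arcs_def)
  ultimately show ?thesis using balanced[OF assms(2)] by simp
qed

theorem lemma1:
  fixes A :: "'a::linorder set" and F :: "'a list set" and n :: nat
    and C :: "'a list set" and r :: "'a list" and e :: "'a list \<Rightarrow> 'a list \<times> 'a list"
    and vs :: "'a list list" and v :: "'a list"
  assumes "finite A" and "n \<ge> 1"
    and "is_dB_vertices A F n C"
    and "r \<in> C"
    and "\<forall>x\<in>C - {r}. e x \<in> dB_arcs A F n C \<and> fst (e x) = x"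
    and "avoids_walk (dB_arcs A F n C) (e ` (C - {r})) e r vs"
    and "v \<in> C"
    and "(v, v) \<notin> (e ` (C - {r}))\<^sup>+"
    and "exhausts (dB_arcs A F n C) (set (walk_arcs vs)) v"
  shows "\<forall>u \<in> {u. (u, v) \<in> (e ` (C - {r}))\<^sup>*}.
           exhausts (dB_arcs A F n C)
             (set (walk_arcs (take (Suc (LEAST k. k < length vs \<and>
                 exhausts (dB_arcs A F n C) (set (walk_arcs (take (Suc k) vs))) v)) vs))) u"
proof -
  define Ar where "Ar = dB_arcs A F n C"
  define Hs where "Hs = e ` (C - {r})"
  define k0 where "k0 = (LEAST k. k < length vs \<and> exhausts Ar (set (walk_arcs (take (Suc k) vs))) v)"
  define L where "L = take (Suc k0) vs"
  define P where "P = walk_arcs L"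
  have aw: "avoids_walk Ar Hs e r vs" using assms(6) unfolding Ar_def Hs_def .
  have vsne: "vs \<noteq> []" "hd vs = r" using aw unfolding avoids_walk_def by auto
  have steps: "\<And>i. i < length vs - 1 \<Longrightarrow>
       (let x = vs ! i; ei = (vs ! i, vs ! Suc i); used = set (take i (walk_arcs vs)) in
        ei \<in> Ar \<and> ei \<notin> used \<and>
        (if (\<exists>a\<in>Ar. fst a = x \<and> a \<notin> Hs \<and> a \<notin> used) then ei \<notin> Hs
         else (x \<noteq> r \<and> ei = e x)))"
    using aw unfolding avoids_walk_def by blast
  have wlen: "length (walk_arcs vs) = length vs - 1" unfolding walk_arcs_def by simp
  have wnth: "\<And>i. i < length vs - 1 \<Longrightarrow> walk_arcs vs ! i = (vs ! i, vs ! Suc i)"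
    unfolding walk_arcs_def by (simp add: nth_tl)
  have k0: "k0 < length vs \<and> exhausts Ar (set P) v"
    unfolding k0_def P_def L_def
    apply (rule LeastI[of _ "length vs - 1"])
    using vsne assms(9) by (simp add: Ar_def)
  have P_eq: "P = take k0 (walk_arcs vs)"
    unfolding P_def L_def walk_arcs_def by (simp add: take_zip tl_take zip_take_Suc)
  have distW: "distinct (walk_arcs vs)"
  proof (rule distinct_by_take, intro allI impI)
    fix i assume "i < length (walk_arcs vs)"
    then show "walk_arcs vs ! i \<notin> set (take i (walk_arcs vs))"
      using steps[of i] wnth[of i] wlen by (simp add: Let_def)
  qed
  have distP: "distinct P" using distW P_eq by simp
  have WsubAr: "set (walk_arcs vs) \<subseteq> Ar"
  proof
    fix a assume "a \<in> set (walk_arcs vs)"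
    then obtain i where "i < length vs - 1" "a = walk_arcs vs ! i" using wlen by (metis in_set_conv_nth)
    then show "a \<in> Ar" using steps[of i] wnth[of i] by (simp add: Let_def)
  qed
  have PsubAr: "set P \<subseteq> Ar" using WsubAr P_eq by (meson set_take_subset subset_trans)
  have Lne: "L \<noteq> []" "hd L = r" using vsne unfolding L_def by auto
  have finAr: "finite Ar"
  proof -
    have "Ar \<subseteq> words A n \<times> words A n" unfolding Ar_def dB_arcs_def using db_arcs_sub[OF assms(2)] by auto
    then show ?thesis using finite_words[OF assms(1)] by (meson finite_SigmaI finite_subset)
  qed
  have step: "\<And>u w. (u, w) \<in> Hs \<Longrightarrow> exhausts Ar (set P) w \<Longrightarrow> exhausts Ar (set P) u"
  proof -
    fix u w assume uw: "(u, w) \<in> Hs" and ew: "exhausts Ar (set P) w"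
    obtain x where x: "x \<in> C - {r}" "e x = (u, w)" using uw unfolding Hs_def by (metis imageE)
    have ex: "e x \<in> dB_arcs A F n C \<and> fst (e x) = x" using assms(5) x(1) by blast
    have ux: "x = u" using ex x(2) by simp
    have uC: "u \<in> C" "u \<noteq> r" using x(1) ux by auto
    have eu: "e u = (u, w)" "e u \<in> Ar" using x(2) ex ux unfolding Ar_def by auto
    have "e u \<in> set P" using ew eu(2) unfolding exhausts_def eu(1) by auto
    then obtain j where j: "j < k0" "j < length vs - 1" "walk_arcs vs ! j = e u"
      unfolding P_eq using wlen by (auto simp: in_set_conv_nth)
    have vj: "vs ! j = u" using j wnth[of j] eu by simp
    have "e u \<in> Hs" using uC unfolding Hs_def by (intro imageI) simp
    then have nounused: "\<not> (\<exists>a\<in>Ar. fst a = u \<and> a \<notin> Hs \<and> a \<notin> set (take j (walk_arcs vs)))"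
      using steps[of j] j wnth[of j] vj by (auto simp: Let_def split: if_splits)
    have tj: "set (take j (walk_arcs vs)) \<subseteq> set P" unfolding P_eq using j
      by (simp add: set_take_subset_set_take)
    have outs: "\<And>a. a \<in> Ar \<Longrightarrow> fst a = u \<Longrightarrow> a \<in> set P"
    proof -
      fix a assume a: "a \<in> Ar" "fst a = u"
      show "a \<in> set P"
      proof (cases "a \<in> Hs")
        case True
        then obtain y where "y \<in> C - {r}" "a = e y" unfolding Hs_def by (metis imageE)
        then have "a = e u" using a assms(5) by auto
        then show ?thesis using \<open>e u \<in> set P\<close> by simp
      next
        case False
        then have "a \<in> set (take j (walk_arcs vs))" using nounused a by blast
        then show ?thesis using tj by blast
      qed
    qed
    have oeq: "{a \<in> set P. fst a = u} = {a \<in> Ar. fst a = u}"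
    proof (intro equalityI subsetI)
      fix a assume "a \<in> {a \<in> set P. fst a = u}" then show "a \<in> {a \<in> Ar. fst a = u}" using PsubAr by auto
    next
      fix a assume "a \<in> {a \<in> Ar. fst a = u}" then show "a \<in> {a \<in> set P. fst a = u}" using outs by auto
    qed
    have "card {a \<in> set P. fst a = u} \<le> card {a \<in> set P. snd a = u}"
      unfolding P_def by (rule count_walk) (use Lne uC distP P_def in auto)
    moreover have "card {a \<in> Ar. fst a = u} = card {a \<in> Ar. snd a = u}"
      using balanced_C[OF assms(1,2,3) uC(1)] unfolding Ar_def .
    ultimately have le: "card {a \<in> Ar. snd a = u} \<le> card {a \<in> set P. snd a = u}"
      using oeq by simp
    have sub: "{a \<in> set P. snd a = u} \<subseteq> {a \<in> Ar. snd a = u}" using PsubAr by blast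
    have fin: "finite {a \<in> Ar. snd a = u}" using finAr by simp
    have "{a \<in> set P. snd a = u} = {a \<in> Ar. snd a = u}" by (rule card_seteq[OF fin sub le])
    then show "exhausts Ar (set P) u" using outs unfolding exhausts_def by blast
  qed
  have "\<forall>u \<in> {u. (u, v) \<in> Hs\<^sup>*}. exhausts Ar (set P) u"
  proof
    fix u assume "u \<in> {u. (u, v) \<in> Hs\<^sup>*}"
    then have "(u, v) \<in> Hs\<^sup>*" by simp
    then show "exhausts Ar (set P) u"
      by (induct rule: converse_rtrancl_induct) (use k0 step in blast)+
  qed
  then show ?thesis unfolding P_def L_def k0_def Ar_def Hs_def .
qed

end
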